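(* For every integer $n\ge 1$, $$\Phi^{(2)}[aq^n; b, b'; c, c'; x, y] = \Phi^{(2)}[a; b, b'; c, c'; x, y] + \frac{ax(1-b)}{1-c} \sum_{k=1}^n q^{k-1} \Phi^{(2)}[aq^k; bq, b'; cq, c'; x, y] + \frac{ay(1-b')}{1-c'} \sum_{k=1}^n q^{k-1} \Phi^{(2)}[aq^k; b, b'q; c, c'q; xq, y]$$ and $$\Phi^{(2)}[aq^{-n}; b, b'; c, c'; x, y] = \Phi^{(2)}[a; b, b'; c, c'; x, y] - \frac{ax(1-b)}{1-c} \sum_{k=1}^n q^{-k} \Phi^{(2)}[aq^{1-k}; bq, b'; cq, c'; x, y] - \frac{ay(1-b')}{1-c'} \sum_{k=1}^n q^{-k} \Phi^{(2)}[aq^{1-k}; b, b'q; c, c'q; xq, y].$$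
   Context: Let $q$ be a complex number with $0<|q|<1$. For complex $z$ and integer $m\ge 0$, $(z;q)_m=\prod_{j=0}^{m-1}(1-zq^j)$, with $(z;q)_0=1$. The $q$-Appell function $\Phi^{(2)}$ is $$\Phi^{(2)}[a; b, b'; c, c'; x, y] = \sum_{m, n \geq 0} \frac{(a; q)_{m+n} (b; q)_m (b'; q)_n}{(q; q)_m (q; q)_n (c; q)_m (c'; q)_n} x^m y^n.$$ Identities are understood as identities of power series in $x,y$ (formal, or convergent for small $|x|,|y|$), with complex parameters chosen so that no denominator occurring vanishes. *)

theory Defs
  imports "HOL-Analysis.Analysis"
begin

definition qpoch :: "complex \<Rightarrow> complex \<Rightarrow> nat \<Rightarrow> complex" where
  "qpoch z q m = (\<Prod>j<m. 1 - z * q ^ j)"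

definition qAppell2 ::
  "complex \<Rightarrow> complex \<Rightarrow> complex \<Rightarrow> complex \<Rightarrow> complex \<Rightarrow> complex \<Rightarrow> complex \<Rightarrow> complex \<Rightarrow> complex" where
  "qAppell2 q a b b' c c' x y =
     (\<Sum>\<^sub>\<infinity>(m, n) \<in> UNIV.
        qpoch a q (m + n) * qpoch b q m * qpoch b' q n /
        (qpoch q q m * qpoch q q n * qpoch c q m * qpoch c' q n) * x ^ m * y ^ n)"

end

theory Submission imports Defs begin

lemma qpoch_Suc: "qpoch z q (Suc m) = qpoch z q m * (1 - z * q ^ m)"
  by (simp add: qpoch_def)

lemma qpoch_Suc_shift: "qpoch z q (Suc m) = (1 - z) * qpoch (z * q) q m"
  unfolding qpoch_def by (subst prod.lessThan_Suc_shift) (simp add: mult.assoc)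

lemma norm_qpoch_le:
  assumes "norm q \<le> 1" "1 + norm z \<le> M"
  shows "norm (qpoch z q m) \<le> M ^ m"
proof -
  have M0: "0 \<le> M" using assms(2) norm_ge_zero[of z] by linarith
  show ?thesis
proof (induction m)
  case 0 then show ?case by (simp add: qpoch_def)
next
  case (Suc m)
  have "norm (1 - z * q ^ m) \<le> 1 + norm z * norm q ^ m"
    by (metis norm_mult norm_power norm_one norm_triangle_ineq4)
  also have "\<dots> \<le> 1 + norm z"
    using assms(1) by (simp add: mult_left_le power_le_one)
  finally have h: "norm (1 - z * q ^ m) \<le> M" using assms(2) by linarith
  have "norm (qpoch z q (Suc m)) = norm (qpoch z q m) * norm (1 - z * q ^ m)"
    by (simp add: qpoch_Suc norm_mult)
  also have "\<dots> \<le> M ^ m * M"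
    by (rule mult_mono[OF Suc h]) (use M0 in auto)
  finally show ?case by (simp add: mult.commute)
qed
qed

lemma norm_inv_qpoch_le:
  assumes "\<And>j. norm (inverse (1 - z * q ^ j)) \<le> M"
  shows "norm (inverse (qpoch z q m)) \<le> M ^ m"
proof -
  have M0: "0 \<le> M" using assms[of 0] norm_ge_zero order_trans by blast
  show ?thesis
proof (induction m)
  case 0 then show ?case by (simp add: qpoch_def)
next
  case (Suc m)
  have "norm (inverse (qpoch z q (Suc m))) = norm (inverse (qpoch z q m)) * norm (inverse (1 - z * q ^ m))"
    by (simp add: qpoch_Suc norm_mult)
  also have "\<dots> \<le> M ^ m * M"
    by (rule mult_mono[OF Suc assms]) (use M0 in auto)
  finally show ?case by (simp add: mult.commute)
qed
qed

lemma geom2: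
  fixes r s :: real
  assumes "0 \<le> r" "r < 1" "0 \<le> s" "s < 1"
  shows "(\<lambda>(m::nat, n::nat). r ^ m * s ^ n) summable_on UNIV"
proof -
  have "(\<lambda>(m::nat, n::nat). r ^ m * s ^ n) summable_on Sigma UNIV (\<lambda>_. UNIV)"
  proof (rule summable_on_SigmaI[where g = "\<lambda>m. r ^ m / (1 - s)"])
    fix m :: nat
    have "(\<lambda>n. r ^ m * s ^ n) sums (r ^ m * (1 / (1 - s)))"
      using geometric_sums[of s] assms by (intro sums_mult) auto
    then show "((\<lambda>n. (\<lambda>(m::nat, n::nat). r ^ m * s ^ n) (m, n)) has_sum r ^ m / (1 - s)) UNIV"
      using assms by (auto intro!: sums_nonneg_imp_has_sum)
  next
    have "(\<lambda>m. r ^ m / (1 - s)) sums (1 / (1 - r) / (1 - s))"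
      using geometric_sums[of r] assms by (intro sums_divide) auto
    then show "(\<lambda>m. r ^ m / (1 - s)) summable_on UNIV"
      using assms by (auto intro!: summable_nonneg_imp_summable_on_strong simp: sums_iff)
  qed (use assms in auto)
  then show ?thesis by simp
qed

definition Tm :: "complex \<Rightarrow> complex \<Rightarrow> complex \<Rightarrow> complex \<Rightarrow> complex \<Rightarrow> complex \<Rightarrow> complex \<Rightarrow> complex \<Rightarrow> nat \<times> nat \<Rightarrow> complex" where
  "Tm q a b b' c c' x y = (\<lambda>(m, n). qpoch a q (m + n) * qpoch b q m * qpoch b' q n /
        (qpoch q q m * qpoch q q n * qpoch c q m * qpoch c' q n) * x ^ m * y ^ n)"

lemma Phi_eq: "qAppell2 q a b b' c c' x y = infsum (Tm q a b b' c c' x y) UNIV"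
  by (simp add: qAppell2_def Tm_def)

lemma Tm_bound:
  assumes "norm q \<le> 1" "1 + norm a \<le> M" "1 + norm b \<le> M" "1 + norm b' \<le> M"
    and "\<And>j. norm (inverse (1 - q * q ^ j)) \<le> M"
    and "\<And>j. norm (inverse (1 - c * q ^ j)) \<le> M"
    and "\<And>j. norm (inverse (1 - c' * q ^ j)) \<le> M"
  shows "norm (Tm q a b b' c c' x y (m, n)) \<le> (M ^ 4 * norm x) ^ m * (M ^ 4 * norm y) ^ n"
proof -
  have M0: "0 \<le> M" using assms(2) norm_ge_zero[of a] by linarith
  have "norm (Tm q a b b' c c' x y (m, n)) =
     norm (qpoch a q (m + n)) * norm (qpoch b q m) * norm (qpoch b' q n) *
     norm (inverse (qpoch q q m)) * norm (inverse (qpoch q q n)) * norm (inverse (qpoch c q m)) *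
     norm (inverse (qpoch c' q n)) * norm x ^ m * norm y ^ n"
    by (simp add: Tm_def norm_mult norm_divide norm_power divide_inverse)
  also have "\<dots> \<le> M ^ (m + n) * M ^ m * M ^ n * M ^ m * M ^ n * M ^ m * M ^ n * norm x ^ m * norm y ^ n"
    apply (intro mult_mono norm_qpoch_le norm_inv_qpoch_le assms)
    using M0 by (auto intro!: mult_nonneg_nonneg)
  also have "\<dots> = (M ^ 4 * norm x) ^ m * (M ^ 4 * norm y) ^ n"
  proof -
    have e: "(M ^ 4) ^ k = M ^ k * M ^ k * M ^ k * M ^ k" for k :: nat
      by (metis power_mult mult.commute power4_eq_xxxx)
    show ?thesis by (simp add: power_add power_mult_distrib e algebra_simps)
  qed
  finally show ?thesis .
qed

lemma Tm_summable:
  assumes "norm q \<le> 1" "1 + norm a \<le> M" "1 + norm b \<le> M" "1 + norm b' \<le> M"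
    and "\<And>j. norm (inverse (1 - q * q ^ j)) \<le> M"
    and "\<And>j. norm (inverse (1 - c * q ^ j)) \<le> M"
    and "\<And>j. norm (inverse (1 - c' * q ^ j)) \<le> M"
    and "M ^ 4 * norm x < 1" "M ^ 4 * norm y < 1"
  shows "Tm q a b b' c c' x y summable_on UNIV"
proof -
  have M0: "0 \<le> M" using assms(2) norm_ge_zero[of a] by linarith
  have g: "(\<lambda>(m::nat, n::nat). (M ^ 4 * norm x) ^ m * (M ^ 4 * norm y) ^ n) summable_on UNIV"
    by (rule geom2) (use assms M0 in auto)
  have "(\<lambda>p. norm (Tm q a b b' c c' x y p)) summable_on UNIV"
    by (rule summable_on_comparison_test[OF g]) (use Tm_bound[OF assms(1-7)] in auto)
  then show ?thesis by (rule abs_summable_summable)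
qed

lemma qpoch_nz: "(\<And>j. z * q ^ j \<noteq> 1) \<Longrightarrow> qpoch z q m \<noteq> 0"
  by (simp add: qpoch_def)

lemma Tm_step:
  assumes hq: "\<And>j. q * q ^ j \<noteq> 1" and hc: "\<And>j. c * q ^ j \<noteq> 1" and hc': "\<And>j. c' * q ^ j \<noteq> 1"
  shows "Tm q (a * q) b b' c c' x y (m, n) = Tm q a b b' c c' x y (m, n)
     + (if m = 0 then 0 else a * x * (1 - b) / (1 - c) * Tm q (a * q) (b * q) b' (c * q) c' x y (m - 1, n))
     + (if n = 0 then 0 else a * y * (1 - b') / (1 - c') * Tm q (a * q) b (b' * q) c (c' * q) (x * q) y (m, n - 1))"
proof -
  define R where "R = qpoch b q m * qpoch b' q n / (qpoch q q m * qpoch q q n * qpoch c q m * qpoch c' q n) * x ^ m * y ^ n"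
  define P where "P = qpoch (a * q) q (m + n - 1)"
  have nzq: "qpoch q q k \<noteq> 0" for k using hq by (intro qpoch_nz) auto
  have nzc: "qpoch c q k \<noteq> 0" for k using hc by (intro qpoch_nz) auto
  have nzc': "qpoch c' q k \<noteq> 0" for k using hc' by (intro qpoch_nz) auto
  have nzcq: "qpoch (c * q) q k \<noteq> 0" for k using hc[of "Suc _"] by (intro qpoch_nz) (auto simp: mult.assoc)
  have nzc'q: "qpoch (c' * q) q k \<noteq> 0" for k using hc'[of "Suc _"] by (intro qpoch_nz) (auto simp: mult.assoc)
  have c1: "1 - c \<noteq> 0" using hc[of 0] by auto
  have c1': "1 - c' \<noteq> 0" using hc'[of 0] by auto
  have q1: "1 - q * q ^ k \<noteq> 0" for k using hq[of k] by auto
  have E1: "(if m = 0 then 0 else a * x * (1 - b) / (1 - c) * Tm q (a * q) (b * q) b' (c * q) c' x y (m - 1, n))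
      = a * (1 - q ^ m) * P * R"
  proof (cases m)
    case 0 then show ?thesis by simp
  next
    case (Suc k)
    show ?thesis
      unfolding Suc R_def P_def Tm_def
      apply (simp only: qpoch_Suc_shift[of b] qpoch_Suc_shift[of c] qpoch_Suc[of q q] power_Suc diff_Suc_1 add_Suc split_def fst_conv snd_conv if_False nat.distinct)
      using nzq[of k] nzq[of n] nzcq[of k] nzc'[of n] c1 q1[of k]
      by (simp add: divide_simps)
  qed
  have E2: "(if n = 0 then 0 else a * y * (1 - b') / (1 - c') * Tm q (a * q) b (b' * q) c (c' * q) (x * q) y (m, n - 1))
      = a * q ^ m * (1 - q ^ n) * P * R"
  proof (cases n)
    case 0 then show ?thesis by simp
  next
    case (Suc k)
    show ?thesis
      unfolding Suc R_def P_def Tm_def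
      apply (simp only: qpoch_Suc_shift[of b'] qpoch_Suc_shift[of c'] qpoch_Suc[of q q] power_Suc diff_Suc_1 add_Suc_right split_def fst_conv snd_conv if_False nat.distinct power_mult_distrib)
      using nzq[of k] nzq[of m] nzc'q[of k] nzc[of m] c1' q1[of k]
      by (simp add: divide_simps)
  qed
  have E0: "Tm q (a * q) b b' c c' x y (m, n) - Tm q a b b' c c' x y (m, n) = a * (1 - q ^ (m + n)) * P * R"
  proof (cases "m + n")
    case 0 then show ?thesis by (simp add: Tm_def qpoch_def)
  next
    case (Suc t)
    have "qpoch (a * q) q (m + n) - qpoch a q (m + n) = a * (1 - q ^ (m + n)) * P"
      unfolding Suc P_def by (simp add: qpoch_Suc_shift[of a] qpoch_Suc[of "a * q"] algebra_simps)
    moreover have "Tm q a' b b' c c' x y (m, n) = qpoch a' q (m + n) * R" for a'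
      unfolding R_def Tm_def by simp
    ultimately show ?thesis by (metis left_diff_distrib)
  qed
  have id: "1 - q ^ (m + n) = (1 - q ^ m) + q ^ m * (1 - q ^ n)"
    by (simp add: power_add algebra_simps)
  have "Tm q (a * q) b b' c c' x y (m, n) = Tm q a b b' c c' x y (m, n) + a * (1 - q ^ (m + n)) * P * R"
    using E0 by (simp add: algebra_simps)
  also have "\<dots> = Tm q a b b' c c' x y (m, n) + a * (1 - q ^ m) * P * R + a * q ^ m * (1 - q ^ n) * P * R"
    unfolding id by (simp add: algebra_simps)
  finally show ?thesis unfolding E1 E2 .
qed

lemma shift_has_sum1:
  fixes F :: "nat \<times> nat \<Rightarrow> complex"
  assumes "(F has_sum S) UNIV"
  shows "((\<lambda>p. if fst p = 0 then 0 else F (fst p - 1, snd p)) has_sum S) UNIV"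
proof -
  define h where "h = (\<lambda>(m::nat, n::nat). (Suc m, n))"
  have inj: "inj h" unfolding h_def by (auto simp: inj_def)
  have "((\<lambda>p. if fst p = 0 then 0 else F (fst p - 1, snd p)) \<circ> h) = F"
    unfolding h_def by (auto simp: fun_eq_iff)
  with assms have "((\<lambda>p. if fst p = 0 then 0 else F (fst p - 1, snd p)) has_sum S) (h ` UNIV)"
    by (simp add: has_sum_reindex[OF inj])
  moreover have "p \<in> range h" if "fst p \<noteq> 0" for p
  proof -
    obtain k where "fst p = Suc k" using \<open>fst p \<noteq> 0\<close> not0_implies_Suc by blast
    then have "p = h (k, snd p)" unfolding h_def by (cases p) auto
    then show ?thesis by blast
  qed
  ultimately show ?thesis
    by (subst (asm) has_sum_cong_neutral[where T = UNIV]) auto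
qed

lemma shift_has_sum2:
  fixes F :: "nat \<times> nat \<Rightarrow> complex"
  assumes "(F has_sum S) UNIV"
  shows "((\<lambda>p. if snd p = 0 then 0 else F (fst p, snd p - 1)) has_sum S) UNIV"
proof -
  define h where "h = (\<lambda>(m::nat, n::nat). (m, Suc n))"
  have inj: "inj h" unfolding h_def by (auto simp: inj_def)
  have "((\<lambda>p. if snd p = 0 then 0 else F (fst p, snd p - 1)) \<circ> h) = F"
    unfolding h_def by (auto simp: fun_eq_iff)
  with assms have "((\<lambda>p. if snd p = 0 then 0 else F (fst p, snd p - 1)) has_sum S) (h ` UNIV)"
    by (simp add: has_sum_reindex[OF inj])
  moreover have "p \<in> range h" if "snd p \<noteq> 0" for p
  proof -
    obtain k where "snd p = Suc k" using \<open>snd p \<noteq> 0\<close> not0_implies_Suc by blast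
    then have "p = h (fst p, k)" unfolding h_def by (cases p) auto
    then show ?thesis by blast
  qed
  ultimately show ?thesis
    by (subst (asm) has_sum_cong_neutral[where T = UNIV]) auto
qed

lemma Phi_step:
  assumes hq: "\<And>j. q * q ^ j \<noteq> 1" and hc: "\<And>j. c * q ^ j \<noteq> 1" and hc': "\<And>j. c' * q ^ j \<noteq> 1"
    and S0: "Tm q a b b' c c' x y summable_on UNIV"
    and S1: "Tm q (a * q) (b * q) b' (c * q) c' x y summable_on UNIV"
    and S2: "Tm q (a * q) b (b' * q) c (c' * q) (x * q) y summable_on UNIV"
  shows "qAppell2 q (a * q) b b' c c' x y = qAppell2 q a b b' c c' x y
     + a * x * (1 - b) / (1 - c) * qAppell2 q (a * q) (b * q) b' (c * q) c' x y
     + a * y * (1 - b') / (1 - c') * qAppell2 q (a * q) b (b' * q) c (c' * q) (x * q) y"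
proof -
  define C1 where "C1 = a * x * (1 - b) / (1 - c)"
  define C2 where "C2 = a * y * (1 - b') / (1 - c')"
  define F1 where "F1 = Tm q (a * q) (b * q) b' (c * q) c' x y"
  define F2 where "F2 = Tm q (a * q) b (b' * q) c (c' * q) (x * q) y"
  have h0: "(Tm q a b b' c c' x y has_sum qAppell2 q a b b' c c' x y) UNIV"
    using S0 by (simp add: Phi_eq summable_iff_has_sum_infsum)
  have "((\<lambda>p. C1 * F1 p) has_sum C1 * qAppell2 q (a * q) (b * q) b' (c * q) c' x y) UNIV"
    using S1 unfolding F1_def by (intro has_sum_cmult_right) (simp add: Phi_eq summable_iff_has_sum_infsum)
  from shift_has_sum1[OF this]
  have h1: "((\<lambda>p. if fst p = 0 then 0 else C1 * F1 (fst p - 1, snd p)) has_sum C1 * qAppell2 q (a * q) (b * q) b' (c * q) c' x y) UNIV" .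
  have "((\<lambda>p. C2 * F2 p) has_sum C2 * qAppell2 q (a * q) b (b' * q) c (c' * q) (x * q) y) UNIV"
    using S2 unfolding F2_def by (intro has_sum_cmult_right) (simp add: Phi_eq summable_iff_has_sum_infsum)
  from shift_has_sum2[OF this]
  have h2: "((\<lambda>p. if snd p = 0 then 0 else C2 * F2 (fst p, snd p - 1)) has_sum C2 * qAppell2 q (a * q) b (b' * q) c (c' * q) (x * q) y) UNIV" .
  have "((\<lambda>p. Tm q a b b' c c' x y p + (if fst p = 0 then 0 else C1 * F1 (fst p - 1, snd p))
        + (if snd p = 0 then 0 else C2 * F2 (fst p, snd p - 1))) has_sum
      qAppell2 q a b b' c c' x y + C1 * qAppell2 q (a * q) (b * q) b' (c * q) c' x y
        + C2 * qAppell2 q (a * q) b (b' * q) c (c' * q) (x * q) y) UNIV"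
    by (intro has_sum_add h0 h1 h2)
  also have "(\<lambda>p. Tm q a b b' c c' x y p + (if fst p = 0 then 0 else C1 * F1 (fst p - 1, snd p))
        + (if snd p = 0 then 0 else C2 * F2 (fst p, snd p - 1))) = Tm q (a * q) b b' c c' x y"
  proof
    fix p :: "nat \<times> nat"
    obtain m n where p: "p = (m, n)" by (cases p)
    show "Tm q a b b' c c' x y p + (if fst p = 0 then 0 else C1 * F1 (fst p - 1, snd p))
        + (if snd p = 0 then 0 else C2 * F2 (fst p, snd p - 1)) = Tm q (a * q) b b' c c' x y p"
      unfolding p C1_def C2_def F1_def F2_def using Tm_step[OF hq hc hc', of a b b' x y m n] by simp
  qed
  finally show ?thesis unfolding Phi_eq[of q "a * q"] C1_def C2_def by (rule infsumI)
qed

lemma inv_bound: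
  fixes c q :: complex
  assumes "norm q < 1" "\<And>j. c * q ^ j \<noteq> 1"
  obtains K where "K > 0" "\<And>j. norm (inverse (1 - c * q ^ j)) \<le> K"
proof -
  have "(\<lambda>j. c * q ^ j) \<longlonglongrightarrow> c * 0"
    by (intro tendsto_mult tendsto_const LIMSEQ_power_zero assms(1))
  then have "(\<lambda>j. inverse (1 - c * q ^ j)) \<longlonglongrightarrow> inverse (1 - 0)"
    by (intro tendsto_inverse tendsto_diff tendsto_const) auto
  then have "Bseq (\<lambda>j. inverse (1 - c * q ^ j))"
    by (intro convergent_imp_Bseq) (auto simp: convergent_def)
  then show ?thesis using that by (auto elim!: BseqE)
qed

theorem theorem6:
  fixes q a b b' c c' :: complex and n :: nat
  assumes "0 < norm q" and "norm q < 1"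
    and "\<And>j::nat. c * q ^ j \<noteq> 1" and "\<And>j::nat. c' * q ^ j \<noteq> 1"
    and "n \<ge> 1"
  shows "\<exists>r>0. \<forall>x y :: complex. norm x < r \<longrightarrow> norm y < r \<longrightarrow>
     qAppell2 q (a * q ^ n) b b' c c' x y =
       qAppell2 q a b b' c c' x y
       + a * x * (1 - b) / (1 - c) *
           (\<Sum>k=1..n. q ^ (k - 1) * qAppell2 q (a * q ^ k) (b * q) b' (c * q) c' x y)
       + a * y * (1 - b') / (1 - c') *
           (\<Sum>k=1..n. q ^ (k - 1) * qAppell2 q (a * q ^ k) b (b' * q) c (c' * q) (x * q) y)
     \<and>
     qAppell2 q (a * q powi (- int n)) b b' c c' x y =
       qAppell2 q a b b' c c' x y
       - a * x * (1 - b) / (1 - c) *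
           (\<Sum>k=1..n. q powi (- int k) *
              qAppell2 q (a * q powi (1 - int k)) (b * q) b' (c * q) c' x y)
       - a * y * (1 - b') / (1 - c') *
           (\<Sum>k=1..n. q powi (- int k) *
              qAppell2 q (a * q powi (1 - int k)) b (b' * q) c (c' * q) (x * q) y)"
proof -
  have q0: "q \<noteq> 0" using assms(1) by auto
  have hc: "\<And>j. c * q ^ j \<noteq> 1" and hc': "\<And>j. c' * q ^ j \<noteq> 1" by fact+
  have hq: "q * q ^ j \<noteq> 1" for j
  proof
    assume "q * q ^ j = 1"
    then have "norm q ^ Suc j = 1" by (metis norm_one norm_power power_Suc)
    moreover have "norm q ^ Suc j < 1" using assms(1,2) by (intro power_Suc_less_one) auto
    ultimately show False by simp
  qed
  have hcq: "(c * q) * q ^ j \<noteq> 1" for j using hc[of "Suc j"] by (simp add: mult.assoc)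
  have hc'q: "(c' * q) * q ^ j \<noteq> 1" for j using hc'[of "Suc j"] by (simp add: mult.assoc)
  obtain Kc where Kc: "\<And>j. norm (inverse (1 - c * q ^ j)) \<le> Kc" using inv_bound[OF assms(2) hc] by blast
  obtain Kc' where Kc': "\<And>j. norm (inverse (1 - c' * q ^ j)) \<le> Kc'" using inv_bound[OF assms(2) hc'] by blast
  obtain Kq where Kq: "\<And>j. norm (inverse (1 - q * q ^ j)) \<le> Kq" using inv_bound[OF assms(2) hq] by blast
  define M where "M = max (max (1 + norm a / norm q ^ n) (max (1 + norm b) (1 + norm b'))) (max Kq (max Kc Kc'))"
  have M1: "1 \<le> M" unfolding M_def using norm_ge_zero[of b] by linarith
  have Mb: "1 + norm b \<le> M" "1 + norm b' \<le> M" unfolding M_def by auto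
  have Mbq: "1 + norm (b * q) \<le> M" "1 + norm (b' * q) \<le> M"
  proof -
    have "norm b * norm q \<le> norm b" "norm b' * norm q \<le> norm b'"
      using assms(2) by (auto intro: mult_left_le)
    then show "1 + norm (b * q) \<le> M" "1 + norm (b' * q) \<le> M" using Mb by (auto simp: norm_mult)
  qed
  have MKq: "norm (inverse (1 - q * q ^ j)) \<le> M" for j using Kq[of j] unfolding M_def by linarith
  have MKc: "norm (inverse (1 - c * q ^ j)) \<le> M" for j using Kc[of j] unfolding M_def by linarith
  have MKc': "norm (inverse (1 - c' * q ^ j)) \<le> M" for j using Kc'[of j] unfolding M_def by linarith
  have MKcq: "norm (inverse (1 - (c * q) * q ^ j)) \<le> M" for j using MKc[of "Suc j"] by (simp add: mult.assoc)
  have MKc'q: "norm (inverse (1 - (c' * q) * q ^ j)) \<le> M" for j using MKc'[of "Suc j"] by (simp add: mult.assoc)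
  have Ma: "1 + norm (a * q ^ k) \<le> M" for k
  proof -
    have "norm (a * q ^ k) \<le> norm a" using assms(2) by (simp add: norm_mult norm_power mult_left_le power_le_one)
    also have "norm a \<le> norm a / norm q ^ n" using assms(1,2)
      by (simp add: le_divide_eq power_le_one mult_left_le)
    finally show ?thesis unfolding M_def by linarith
  qed
  have Ma': "1 + norm (a * inverse (q ^ k)) \<le> M" if "k \<le> n" for k
  proof -
    have "norm q ^ n \<le> norm q ^ k" using assms(1,2) that by (intro power_decreasing) auto
    then have "norm a / norm q ^ k \<le> norm a / norm q ^ n" using assms(1)
      by (intro divide_left_mono) auto
    then show ?thesis unfolding M_def by (simp add: norm_mult norm_inverse norm_power divide_inverse)
  qed
  define r where "r = 1 / M ^ 4"
  have r0: "r > 0" unfolding r_def using M1 by auto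
  show ?thesis
  proof (intro exI[of _ r] conjI allI impI r0)
    fix x y :: complex
    assume x: "norm x < r" and y: "norm y < r"
    have Mx: "M ^ 4 * norm x < 1" using x M1 unfolding r_def by (simp add: field_simps)
    have My: "M ^ 4 * norm y < 1" using y M1 unfolding r_def by (simp add: field_simps)
    have Mxq: "M ^ 4 * norm (x * q) < 1"
    proof -
      have "norm (x * q) \<le> norm x" using assms(2) by (simp add: norm_mult mult_left_le)
      then show ?thesis using Mx M1 by (smt (verit) mult_left_mono zero_le_power)
    qed
    have nq: "norm q \<le> 1" using assms(2) by simp
    note S = Tm_summable[OF nq]
    show "qAppell2 q (a * q ^ n) b b' c c' x y =
       qAppell2 q a b b' c c' x y
       + a * x * (1 - b) / (1 - c) *
           (\<Sum>k=1..n. q ^ (k - 1) * qAppell2 q (a * q ^ k) (b * q) b' (c * q) c' x y)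
       + a * y * (1 - b') / (1 - c') *
           (\<Sum>k=1..n. q ^ (k - 1) * qAppell2 q (a * q ^ k) b (b' * q) c (c' * q) (x * q) y)"
    proof (induction n)
      case 0 then show ?case by simp
    next
      case (Suc k)
      have e: "a * q ^ k * q = a * q ^ Suc k" by (simp add: mult.assoc mult.commute)
      have st: "qAppell2 q (a * q ^ Suc k) b b' c c' x y = qAppell2 q (a * q ^ k) b b' c c' x y
        + a * q ^ k * x * (1 - b) / (1 - c) * qAppell2 q (a * q ^ Suc k) (b * q) b' (c * q) c' x y
        + a * q ^ k * y * (1 - b') / (1 - c') * qAppell2 q (a * q ^ Suc k) b (b' * q) c (c' * q) (x * q) y"
        using Phi_step[OF hq hc hc', of "a * q ^ k" b b' x y] 
          S[OF Ma Mb(1) Mb(2) MKq MKc MKc' Mx My]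
          S[OF Ma[of "Suc k", folded e] Mbq(1) Mb(2) MKq MKcq MKc' Mx My]
          S[OF Ma[of "Suc k", folded e] Mb(1) Mbq(2) MKq MKc MKc'q Mxq My]
        unfolding e by simp
      show ?case unfolding st Suc.IH by (simp add: algebra_simps)
    qed
  next
    fix x y :: complex
    assume x: "norm x < r" and y: "norm y < r"
    have Mx: "M ^ 4 * norm x < 1" using x M1 unfolding r_def by (simp add: field_simps)
    have My: "M ^ 4 * norm y < 1" using y M1 unfolding r_def by (simp add: field_simps)
    have Mxq: "M ^ 4 * norm (x * q) < 1"
    proof -
      have "norm (x * q) \<le> norm x" using assms(2) by (simp add: norm_mult mult_left_le)
      then show ?thesis using Mx M1 by (smt (verit) mult_left_mono zero_le_power)
    qed
    have nq: "norm q \<le> 1" using assms(2) by simp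
    note S = Tm_summable[OF nq]
    have pw1: "q powi (- int k) = inverse (q ^ k)" for k by (simp add: power_int_minus)
    have pw2: "q powi (1 - int (Suc k)) = inverse (q ^ k)" for k by (simp add: power_int_minus)
    have main: "k \<le> n \<Longrightarrow> qAppell2 q (a * inverse (q ^ k)) b b' c c' x y =
       qAppell2 q a b b' c c' x y
       - a * x * (1 - b) / (1 - c) *
           (\<Sum>i=1..k. q powi (- int i) *
              qAppell2 q (a * q powi (1 - int i)) (b * q) b' (c * q) c' x y)
       - a * y * (1 - b') / (1 - c') *
           (\<Sum>i=1..k. q powi (- int i) *
              qAppell2 q (a * q powi (1 - int i)) b (b' * q) c (c' * q) (x * q) y)" for k
    proof (induction k)
      case 0 then show ?case by simp
    next
      case (Suc k)
      have e: "a * inverse (q ^ Suc k) * q = a * inverse (q ^ k)" using q0 by (simp add: field_simps)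
      have st: "qAppell2 q (a * inverse (q ^ k)) b b' c c' x y = qAppell2 q (a * inverse (q ^ Suc k)) b b' c c' x y
        + a * inverse (q ^ Suc k) * x * (1 - b) / (1 - c) * qAppell2 q (a * inverse (q ^ k)) (b * q) b' (c * q) c' x y
        + a * inverse (q ^ Suc k) * y * (1 - b') / (1 - c') * qAppell2 q (a * inverse (q ^ k)) b (b' * q) c (c' * q) (x * q) y"
        using Phi_step[OF hq hc hc', of "a * inverse (q ^ Suc k)" b b' x y] 
          S[OF Ma'[OF Suc.prems] Mb(1) Mb(2) MKq MKc MKc' Mx My]
          S[OF Ma'[of k, folded e] Mbq(1) Mb(2) MKq MKcq MKc' Mx My]
          S[OF Ma'[of k, folded e] Mb(1) Mbq(2) MKq MKc MKc'q Mxq My]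
          Suc.prems
        unfolding e by simp
      have IH: "qAppell2 q (a * inverse (q ^ k)) b b' c c' x y =
       qAppell2 q a b b' c c' x y
       - a * x * (1 - b) / (1 - c) *
           (\<Sum>i=1..k. q powi (- int i) *
              qAppell2 q (a * q powi (1 - int i)) (b * q) b' (c * q) c' x y)
       - a * y * (1 - b') / (1 - c') *
           (\<Sum>i=1..k. q powi (- int i) *
              qAppell2 q (a * q powi (1 - int i)) b (b' * q) c (c' * q) (x * q) y)"
        using Suc by simp
      show ?case using st unfolding IH by (simp add: pw1 pw2 algebra_simps del: of_nat_Suc)
    qed
    show "qAppell2 q (a * q powi (- int n)) b b' c c' x y =
       qAppell2 q a b b' c c' x y
       - a * x * (1 - b) / (1 - c) *
           (\<Sum>k=1..n. q powi (- int k) *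
              qAppell2 q (a * q powi (1 - int k)) (b * q) b' (c * q) c' x y)
       - a * y * (1 - b') / (1 - c') *
           (\<Sum>k=1..n. q powi (- int k) *
              qAppell2 q (a * q powi (1 - int k)) b (b' * q) c (c' * q) (x * q) y)"
      using main[of n] by (simp add: pw1)
  qed
qed

end
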